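(* Let $\mathbb{X}$ be a reflexive Kadets-Klee real Banach space and $\mathbb{Y}$ any real Banach space (both of dimension greater than $1$). Let $T\in\mathbb{K}(\mathbb{X},\mathbb{Y})$ with $\|T\|=1$ and let $\epsilon>0$. Then $T$ is a uniform $\epsilon$-BPB approximation of itself. In particular, if $\mathbb{X}$ and $\mathbb{Y}$ are finite-dimensional, then every $T\in\mathbb{L}(\mathbb{X},\mathbb{Y})$ with $\|T\|=1$ has a uniform $\epsilon$-BPB approximation for every $\epsilon>0$.
   Context: $\mathbb{K}(\mathbb{X},\mathbb{Y})$ (resp. $\mathbb{L}(\mathbb{X},\mathbb{Y})$) denotes the compact (resp. bounded) linear operators with the operator norm; $S_{\mathbb{X}}$ is the unit sphere. $\mathbb{X}$ is Kadets-Klee if $x_n\to x$ weakly and $\|x_n\|\to\|x\|$ imply $\|x_n-x\|\to0$. For $T\in\mathbb{L}(\mathbb{X},\mathbb{Y})$ with $\|T\|=1$ and fixed $\epsilon>0$, an operator $A\in\mathbb{L}(\mathbb{X},\mathbb{Y})$ with $\|A\|=1$ is a uniform $\epsilon$-BPB approximation of $T$ if there exists $\delta(\epsilon)>0$ such that whenever $x_0\in S_{\mathbb{X}}$ satisfies $\|Tx_0\|>1-\delta(\epsilon)$, there exists $u_0\in S_{\mathbb{X}}$ with $\|Au_0\|=1$, $\|u_0-x_0\|<\epsilon$ and $\|A-T\|<\epsilon$. *)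

theory Defs
  imports "HOL-Analysis.Analysis"
begin

definition compact_operator :: "('a::real_normed_vector \<Rightarrow>\<^sub>L ('b::real_normed_vector)) \<Rightarrow> bool" where
  "compact_operator T \<longleftrightarrow> compact (closure (blinfun_apply T ` cball 0 1))"

definition weakly_converges :: "(nat \<Rightarrow> 'a::real_normed_vector) \<Rightarrow> 'a \<Rightarrow> bool" where
  "weakly_converges xs x \<longleftrightarrow>
     (\<forall>f :: 'a \<Rightarrow>\<^sub>L real. (\<lambda>n. blinfun_apply f (xs n)) \<longlonglongrightarrow> blinfun_apply f x)"

definition reflexive_space :: "'a::real_normed_vector itself \<Rightarrow> bool" where
  "reflexive_space _ \<longleftrightarrow>
     (\<forall>\<phi> :: ('a \<Rightarrow>\<^sub>L real) \<Rightarrow>\<^sub>L real. \<exists>x :: 'a. \<forall>f. blinfun_apply \<phi> f = blinfun_apply f x)"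

definition kadets_klee :: "'a::real_normed_vector itself \<Rightarrow> bool" where
  "kadets_klee _ \<longleftrightarrow>
     (\<forall>(xs :: nat \<Rightarrow> 'a) x. weakly_converges xs x \<and> (\<lambda>n. norm (xs n)) \<longlonglongrightarrow> norm x
        \<longrightarrow> (\<lambda>n. norm (xs n - x)) \<longlonglongrightarrow> 0)"

definition dim_gt_one :: "'a::real_vector itself \<Rightarrow> bool" where
  "dim_gt_one _ \<longleftrightarrow> (\<exists>x y :: 'a. x \<noteq> y \<and> independent {x, y})"

definition finite_dim_space :: "'a::real_vector itself \<Rightarrow> bool" where
  "finite_dim_space _ \<longleftrightarrow> (\<exists>B :: 'a set. finite B \<and> span B = UNIV)"

definition uniform_BPB_approx ::
  "('a::real_normed_vector \<Rightarrow>\<^sub>L ('b::real_normed_vector)) \<Rightarrow> ('a \<Rightarrow>\<^sub>L 'b) \<Rightarrow> real \<Rightarrow> bool" where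
  "uniform_BPB_approx A T \<epsilon> \<longleftrightarrow> norm A = 1 \<and>
     (\<exists>\<delta>>0. \<forall>x0. norm x0 = 1 \<and> norm (blinfun_apply T x0) > 1 - \<delta> \<longrightarrow>
        (\<exists>u0. norm u0 = 1 \<and> norm (blinfun_apply A u0) = 1 \<and> norm (u0 - x0) < \<epsilon> \<and> norm (A - T) < \<epsilon>))"

end

theory Submission
  imports Defs "HOL-Library.Diagonal_Subsequence"
begin

definition sublin :: "('v::real_vector \<Rightarrow> real) \<Rightarrow> bool" where
 "sublin p \<longleftrightarrow> (\<forall>x y. p (x+y) \<le> p x + p y) \<and> (\<forall>c x. c \<ge> 0 \<longrightarrow> p (c *\<^sub>R x) = c * p x)"

definition goodG :: "('v::real_vector \<Rightarrow> real) \<Rightarrow> ('v \<times> real) set \<Rightarrow> bool" where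
 "goodG p G \<longleftrightarrow> (\<forall>x a b. (x,a)\<in>G \<longrightarrow> (x,b)\<in>G \<longrightarrow> a = b) \<and>
    (\<forall>x a y b. (x,a)\<in>G \<longrightarrow> (y,b)\<in>G \<longrightarrow> (x+y,a+b)\<in>G) \<and>
    (\<forall>x a c. (x,a)\<in>G \<longrightarrow> (c *\<^sub>R x, c*a)\<in>G) \<and>
    (\<forall>x a. (x,a)\<in>G \<longrightarrow> a \<le> p x)"

lemma sublin_zero: "sublin p \<Longrightarrow> p 0 = 0"
  unfolding sublin_def by (metis mult_zero_left order_refl scaleR_zero_left)

lemma good_insert0:
  assumes "goodG p G" "sublin p"
  shows "goodG p (insert (0,0) G)"
proof (cases "G = {}")
  case True
  then show ?thesis using sublin_zero[OF assms(2)] unfolding goodG_def by auto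
next
  case False
  then obtain x a where "(x,a) \<in> G" by auto
  then have "(0,0) \<in> G" using assms(1) unfolding goodG_def
    by (metis mult_zero_left scaleR_zero_left)
  then show ?thesis using assms(1) by (simp add: insert_absorb)
qed

lemma good_extend_step:
  assumes g: "goodG p G" and sp: "sublin p" and z0: "(0,0) \<in> G" and zn: "z \<notin> fst ` G"
  shows "\<exists>G'. G \<subseteq> G' \<and> goodG p G' \<and> z \<in> fst ` G'"
proof -
  have hfun: "\<And>x a b. (x,a)\<in>G \<Longrightarrow> (x,b)\<in>G \<Longrightarrow> a = b"
    and add: "\<And>x a y b. (x,a)\<in>G \<Longrightarrow> (y,b)\<in>G \<Longrightarrow> (x+y,a+b)\<in>G"
    and scl: "\<And>x a c. (x,a)\<in>G \<Longrightarrow> (c *\<^sub>R x, c*a)\<in>G"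
    and dom: "\<And>x a. (x,a)\<in>G \<Longrightarrow> a \<le> p x"
    using g unfolding goodG_def by blast+
  have padd: "\<And>x y. p (x+y) \<le> p x + p y" and phom: "\<And>c x. c \<ge> 0 \<Longrightarrow> p (c *\<^sub>R x) = c * p x"
    using sp unfolding sublin_def by blast+
  define S where "S = {a - p (s - z) | s a. (s,a) \<in> G}"
  define c where "c = Sup S"
  have Sne: "S \<noteq> {}" using z0 unfolding S_def by blast
  have Sbd: "\<And>u. u \<in> S \<Longrightarrow> u \<le> p z"
  proof -
    fix u assume "u \<in> S"
    then obtain s a where u: "u = a - p (s - z)" and sa: "(s,a) \<in> G" unfolding S_def by blast
    have "a \<le> p s" using dom[OF sa] .
    also have "p s \<le> p (s - z) + p z" using padd[of "s - z" z] by simp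
    finally show "u \<le> p z" using u by simp
  qed
  have Sbdd: "bdd_above S" using Sbd by (rule bdd_aboveI[where M="p z"])
  have c_up: "\<And>s a. (s,a) \<in> G \<Longrightarrow> a - p (s - z) \<le> c"
    unfolding c_def by (rule cSup_upper[OF _ Sbdd]) (auto simp: S_def)
  have c_low: "\<And>s a. (s,a) \<in> G \<Longrightarrow> c \<le> p (s + z) - a"
  proof -
    fix s a assume sa: "(s,a) \<in> G"
    show "c \<le> p (s + z) - a" unfolding c_def
    proof (rule cSup_least[OF Sne])
      fix u assume "u \<in> S"
      then obtain s' a' where u: "u = a' - p (s' - z)" and sa': "(s',a') \<in> G" unfolding S_def by blast
      have "a + a' \<le> p (s + s')" using dom[OF add[OF sa sa']] .
      also have "p (s + s') \<le> p (s + z) + p (s' - z)" using padd[of "s + z" "s' - z"] by (simp add: algebra_simps)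
      finally show "u \<le> p (s + z) - a" using u by simp
    qed
  qed
  define G' where "G' = {(s + t *\<^sub>R z, a + t * c) | s a t. (s,a) \<in> G}"
  have sub: "G \<subseteq> G'" unfolding G'_def by force
  have zin: "z \<in> fst ` G'" unfolding G'_def using z0 by (force intro: image_eqI[where x="(z, c)"])
  have neg: "\<And>s a. (s,a) \<in> G \<Longrightarrow> (-s, -a) \<in> G" using scl[of _ _ "-1"] by force
  have g': "goodG p G'"
    unfolding goodG_def
  proof (intro conjI allI impI)
    fix x a b assume xa: "(x,a) \<in> G'" and xb: "(x,b) \<in> G'"
    from xa obtain s1 a1 t1 where 1: "x = s1 + t1 *\<^sub>R z" "a = a1 + t1 * c" "(s1,a1) \<in> G" unfolding G'_def by blast
    from xb obtain s2 a2 t2 where 2: "x = s2 + t2 *\<^sub>R z" "b = a2 + t2 * c" "(s2,a2) \<in> G" unfolding G'_def by blast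
    have d: "(s2 - s1, a2 - a1) \<in> G" using add[OF 2(3) neg[OF 1(3)]] by simp
    have t: "t1 = t2"
    proof (rule ccontr)
      assume "t1 \<noteq> t2"
      have "(t1 - t2) *\<^sub>R z = s2 - s1" using 1(1) 2(1) by (simp add: algebra_simps)
      moreover have "z = (1/(t1 - t2)) *\<^sub>R ((t1 - t2) *\<^sub>R z)" using \<open>t1 \<noteq> t2\<close> by simp
      ultimately have "z = (1/(t1 - t2)) *\<^sub>R (s2 - s1)" by simp
      then have "(z, (1/(t1-t2)) * (a2 - a1)) \<in> G" using scl[OF d, of "1/(t1-t2)"] by simp
      then show False using zn by force
    qed
    then have "s1 = s2" using 1(1) 2(1) by simp
    then have "a1 = a2" using hfun 1(3) 2(3) by blast
    then show "a = b" using 1 2 t by simp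
  next
    fix x a y b assume xa: "(x,a) \<in> G'" and yb: "(y,b) \<in> G'"
    from xa obtain s1 a1 t1 where 1: "x = s1 + t1 *\<^sub>R z" "a = a1 + t1 * c" "(s1,a1) \<in> G" unfolding G'_def by blast
    from yb obtain s2 a2 t2 where 2: "y = s2 + t2 *\<^sub>R z" "b = a2 + t2 * c" "(s2,a2) \<in> G" unfolding G'_def by blast
    have "(x+y, a+b) = ((s1+s2) + (t1+t2) *\<^sub>R z, (a1+a2) + (t1+t2)*c)"
      using 1 2 by (simp add: algebra_simps)
    then show "(x+y,a+b) \<in> G'" unfolding G'_def using add[OF 1(3) 2(3)] by blast
  next
    fix x a r assume xa: "(x,a) \<in> G'"
    from xa obtain s1 a1 t1 where 1: "x = s1 + t1 *\<^sub>R z" "a = a1 + t1 * c" "(s1,a1) \<in> G" unfolding G'_def by blast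
    have "(r *\<^sub>R x, r*a) = (r *\<^sub>R s1 + (r*t1) *\<^sub>R z, r*a1 + (r*t1)*c)"
      using 1 by (simp add: algebra_simps)
    then show "(r *\<^sub>R x, r*a) \<in> G'" unfolding G'_def using scl[OF 1(3)] by blast
  next
    fix x a assume xa: "(x,a) \<in> G'"
    from xa obtain s a1 t where 1: "x = s + t *\<^sub>R z" "a = a1 + t * c" "(s,a1) \<in> G" unfolding G'_def by blast
    consider "t = 0" | "t > 0" | "t < 0" by linarith
    then show "a \<le> p x"
    proof cases
      case 1 then show ?thesis using \<open>x = _\<close> \<open>a = _\<close> dom[OF \<open>(s,a1)\<in>G\<close>] by simp
    next
      case 2
      have m: "((1/t) *\<^sub>R s, (1/t) * a1) \<in> G" using scl[OF 1(3)] .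
      have "c \<le> p ((1/t) *\<^sub>R s + z) - (1/t) * a1" using c_low[OF m] .
      then have "t * c \<le> t * p ((1/t) *\<^sub>R s + z) - a1" using 2
        by (simp add: field_simps mult_left_mono)
      also have "t * p ((1/t) *\<^sub>R s + z) = p (t *\<^sub>R ((1/t) *\<^sub>R s + z))" using phom 2 by simp
      also have "t *\<^sub>R ((1/t) *\<^sub>R s + z) = x" using 2 1(1) by (simp add: algebra_simps)
      finally show ?thesis using 1(2) by simp
    next
      case 3
      define u where "u = -t"
      have u: "u > 0" using 3 u_def by simp
      have m: "((1/u) *\<^sub>R s, (1/u) * a1) \<in> G" using scl[OF 1(3)] .
      have "(1/u) * a1 - p ((1/u) *\<^sub>R s - z) \<le> c" using c_up[OF m] .
      then have "a1 - u * p ((1/u) *\<^sub>R s - z) \<le> u * c" using u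
        by (simp add: field_simps mult_left_mono)
      also have "u * p ((1/u) *\<^sub>R s - z) = p (u *\<^sub>R ((1/u) *\<^sub>R s - z))" using phom u by simp
      also have "u *\<^sub>R ((1/u) *\<^sub>R s - z) = x" using u 1(1) u_def by (simp add: algebra_simps)
      finally show ?thesis using 1(2) u_def by simp
    qed
  qed
  show ?thesis using sub g' zin by blast
qed

lemma good_extend:
  assumes g: "goodG p G" and sp: "sublin p"
  shows "\<exists>G'. G \<subseteq> G' \<and> goodG p G' \<and> z \<in> fst ` G'"
proof (cases "z \<in> fst ` insert (0,0) G")
  case True
  have "G \<subseteq> insert (0,0) G" by (rule subset_insertI)
  with True good_insert0[OF g sp] show ?thesis by (intro exI[of _ "insert (0,0) G"]) simp
next
  case False
  obtain G' where G': "insert (0,0) G \<subseteq> G'" "goodG p G'" "z \<in> fst ` G'"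
    using good_extend_step[OF good_insert0[OF g sp] sp _ False] by auto
  have "G \<subseteq> G'" using G'(1) by (simp add: insert_subset)
  with G' show ?thesis by (intro exI[of _ G']) simp
qed

lemma good_union_chain:
  assumes C: "C \<in> chains {H. G \<subseteq> H \<and> goodG p H}" and ne: "C \<noteq> {}"
  shows "goodG p (\<Union>C)"
proof -
  have CA: "\<And>H. H \<in> C \<Longrightarrow> goodG p H" using C unfolding chains_def by blast
  have ch: "\<And>X Y. X \<in> C \<Longrightarrow> Y \<in> C \<Longrightarrow> X \<subseteq> Y \<or> Y \<subseteq> X"
    using C unfolding chains_def chain_subset_def by blast
  have two: "\<And>u v. u \<in> \<Union>C \<Longrightarrow> v \<in> \<Union>C \<Longrightarrow> \<exists>H\<in>C. u \<in> H \<and> v \<in> H"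
  proof -
    fix u v assume "u \<in> \<Union>C" "v \<in> \<Union>C"
    then obtain X Y where "X \<in> C" "Y \<in> C" "u \<in> X" "v \<in> Y" by blast
    then show "\<exists>H\<in>C. u \<in> H \<and> v \<in> H" using ch[of X Y] by blast
  qed
  show ?thesis unfolding goodG_def
  proof (intro conjI allI impI)
    fix x a b assume "(x,a) \<in> \<Union>C" "(x,b) \<in> \<Union>C"
    then obtain H where "H \<in> C" "(x,a) \<in> H" "(x,b) \<in> H" using two by blast
    then show "a = b" using CA unfolding goodG_def by blast
  next
    fix x a y b assume "(x,a) \<in> \<Union>C" "(y,b) \<in> \<Union>C"
    then obtain H where "H \<in> C" "(x,a) \<in> H" "(y,b) \<in> H" using two by blast
    then have "(x+y,a+b) \<in> H" using CA unfolding goodG_def by blast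
    then show "(x+y,a+b) \<in> \<Union>C" using \<open>H \<in> C\<close> by blast
  next
    fix x a c assume "(x,a) \<in> \<Union>C"
    then obtain H where "H \<in> C" "(x,a) \<in> H" by blast
    then have "(c *\<^sub>R x, c*a) \<in> H" using CA unfolding goodG_def by blast
    then show "(c *\<^sub>R x, c*a) \<in> \<Union>C" using \<open>H \<in> C\<close> by blast
  next
    fix x a assume "(x,a) \<in> \<Union>C"
    then obtain H where "H \<in> C" "(x,a) \<in> H" by blast
    then show "a \<le> p x" using CA unfolding goodG_def by blast
  qed
qed

theorem hahn_banach:
  assumes g: "goodG p G" and sp: "sublin p"
  shows "\<exists>L. linear L \<and> (\<forall>x. L x \<le> p x) \<and> (\<forall>x a. (x,a) \<in> G \<longrightarrow> L x = a)"
proof -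
  let ?A = "{H. G \<subseteq> H \<and> goodG p H}"
  have "\<exists>M\<in>?A. \<forall>X\<in>?A. M \<subseteq> X \<longrightarrow> X = M"
  proof (rule Zorn_Lemma2, intro ballI)
    fix C assume C: "C \<in> chains ?A"
    show "\<exists>U\<in>?A. \<forall>X\<in>C. X \<subseteq> U"
    proof (cases "C = {}")
      case True then show ?thesis using g by (intro bexI[of _ G]) auto
    next
      case False
      obtain H where "H \<in> C" using False by blast
      then have "H \<in> ?A" using C unfolding chains_def by (auto simp del: mem_Collect_eq)
      then have "G \<subseteq> H" by simp
      then have "G \<subseteq> \<Union>C" using \<open>H \<in> C\<close> by blast
      then have "\<Union>C \<in> ?A" using good_union_chain[OF C False] by simp
      moreover have "\<forall>X\<in>C. X \<subseteq> \<Union>C" by blast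
      ultimately show ?thesis by (intro bexI[of _ "\<Union>C"])
    qed
  qed
  then obtain M where MA: "M \<in> ?A" and max0: "\<forall>X\<in>?A. M \<subseteq> X \<longrightarrow> X = M" by (elim bexE)
  have max: "\<And>X. X \<in> ?A \<Longrightarrow> M \<subseteq> X \<Longrightarrow> X = M" using max0 by (simp only: Ball_def)
  have gM: "goodG p M" and GM: "G \<subseteq> M" using MA by auto
  have hfun: "\<And>x a b. (x,a)\<in>M \<Longrightarrow> (x,b)\<in>M \<Longrightarrow> a = b"
    and add: "\<And>x a y b. (x,a)\<in>M \<Longrightarrow> (y,b)\<in>M \<Longrightarrow> (x+y,a+b)\<in>M"
    and scl: "\<And>x a c. (x,a)\<in>M \<Longrightarrow> (c *\<^sub>R x, c*a)\<in>M"
    and dom: "\<And>x a. (x,a)\<in>M \<Longrightarrow> a \<le> p x"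
    using gM unfolding goodG_def by blast+
  have all: "\<And>z. \<exists>a. (z,a) \<in> M"
  proof -
    fix z
    obtain G' where "M \<subseteq> G'" "goodG p G'" "z \<in> fst ` G'" using good_extend[OF gM sp] by blast
    then have "G' \<in> ?A" using GM by simp
    then have "G' = M" using \<open>M \<subseteq> G'\<close> by (rule max)
    then obtain w where "w \<in> M" "z = fst w" using \<open>z \<in> fst ` G'\<close> by blast
    then show "\<exists>a. (z,a) \<in> M" by (intro exI[of _ "snd w"]) simp
  qed
  define L where "L z = (THE a. (z,a) \<in> M)" for z
  have LM: "\<And>z. (z, L z) \<in> M"
  proof -
    fix z obtain a where a: "(z,a) \<in> M" using all by blast
    have "L z = a" unfolding L_def using a hfun by (intro the_equality) auto
    then show "(z, L z) \<in> M" using a by simp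
  qed
  have Leq: "\<And>z a. (z,a) \<in> M \<Longrightarrow> L z = a" using LM hfun by blast
  have "linear L"
  proof (rule linearI)
    fix x y show "L (x + y) = L x + L y" using Leq[OF add[OF LM LM]] .
  next
    fix c x show "L (c *\<^sub>R x) = c *\<^sub>R L x" using Leq[OF scl[OF LM]] by simp
  qed
  moreover have "\<forall>x. L x \<le> p x" using dom LM by blast
  moreover have "\<forall>x a. (x,a) \<in> G \<longrightarrow> L x = a" using Leq GM by blast
  ultimately show ?thesis by blast
qed

lemma sublin_norm: "sublin (norm :: 'a::real_normed_vector \<Rightarrow> real)"
  unfolding sublin_def by (auto simp: norm_triangle_ineq)

lemma blinfun_of_dominated:
  fixes L :: "'a::real_normed_vector \<Rightarrow> real"
  assumes lin: "linear L" and dom: "\<And>x. L x \<le> C * norm x" and C: "C \<ge> 0"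
  shows "\<exists>f::'a \<Rightarrow>\<^sub>L real. (\<forall>x. blinfun_apply f x = L x) \<and> norm f \<le> C"
proof -
  have ab: "\<And>x. norm (L x) \<le> norm x * C"
  proof -
    fix x
    have "- L x = L (- x)" using linear_neg[OF lin] by simp
    also have "\<dots> \<le> C * norm x" using dom[of "-x"] by simp
    finally show "norm (L x) \<le> norm x * C" using dom[of x] by (simp add: abs_le_iff mult.commute)
  qed
  have bl: "bounded_linear L"
    by (rule bounded_linear_intro[OF linear_add[OF lin] linear_scale[OF lin] ab])
  let ?f = "Blinfun L"
  have ap: "blinfun_apply ?f = L" by (rule bounded_linear_Blinfun_apply[OF bl])
  have "norm ?f \<le> C" by (rule norm_blinfun_bound[OF C]) (simp add: ap, metis ab mult.commute real_norm_def)
  with ap show ?thesis by (intro exI[of _ ?f]) simp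
qed

lemma hb_norm:
  fixes d :: "'a::real_normed_vector"
  shows "\<exists>f::'a \<Rightarrow>\<^sub>L real. norm f \<le> 1 \<and> blinfun_apply f d = norm d"
proof -
  define G where "G = {(t *\<^sub>R d, t * norm d) | t. True}"
  have "goodG norm G" unfolding goodG_def
  proof (intro conjI allI impI)
    fix x a b assume "(x,a) \<in> G" "(x,b) \<in> G"
    then obtain t1 t2 where "x = t1 *\<^sub>R d" "a = t1 * norm d" "x = t2 *\<^sub>R d" "b = t2 * norm d"
      unfolding G_def by blast
    then show "a = b" by (cases "d = 0") auto
  next
    fix x a y b assume "(x,a) \<in> G" "(y,b) \<in> G"
    then obtain t1 t2 where "x = t1 *\<^sub>R d" "a = t1 * norm d" "y = t2 *\<^sub>R d" "b = t2 * norm d"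
      unfolding G_def by blast
    then have "(x+y, a+b) = ((t1+t2) *\<^sub>R d, (t1+t2) * norm d)" by (simp add: algebra_simps)
    then show "(x+y,a+b) \<in> G" unfolding G_def by blast
  next
    fix x a c assume "(x,a) \<in> G"
    then obtain t1 where "x = t1 *\<^sub>R d" "a = t1 * norm d" unfolding G_def by blast
    then have "(c *\<^sub>R x, c*a) = ((c*t1) *\<^sub>R d, (c*t1) * norm d)" by simp
    then show "(c *\<^sub>R x, c*a) \<in> G" unfolding G_def by blast
  next
    fix x a assume "(x,a) \<in> G"
    then obtain t1 where "x = t1 *\<^sub>R d" "a = t1 * norm d" unfolding G_def by blast
    then show "a \<le> norm x" by (simp add: mult_right_mono)
  qed
  then obtain L where L: "linear L" "\<And>x. L x \<le> norm x" "\<And>x a. (x,a) \<in> G \<Longrightarrow> L x = a"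
    using hahn_banach[OF _ sublin_norm] by blast
  have "(d, norm d) \<in> G" unfolding G_def by (auto intro: exI[of _ 1])
  then have Ld: "L d = norm d" using L(3) by blast
  obtain f :: "'a \<Rightarrow>\<^sub>L real" where "\<forall>x. f x = L x" "norm f \<le> 1"
    using blinfun_of_dominated[OF L(1), of 1] L(2) by auto
  then show ?thesis using Ld by auto
qed

lemma hb_sep:
  fixes M :: "'a::real_normed_vector set"
  assumes sM: "subspace M" and cM: "closed M" and zM: "z \<notin> M"
  shows "\<exists>f::'a \<Rightarrow>\<^sub>L real. (\<forall>m\<in>M. blinfun_apply f m = 0) \<and> blinfun_apply f z = 1"
proof -
  have M0: "0 \<in> M" and Madd: "\<And>x y. x \<in> M \<Longrightarrow> y \<in> M \<Longrightarrow> x + y \<in> M"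
    and Mscl: "\<And>c x. x \<in> M \<Longrightarrow> c *\<^sub>R x \<in> M"
    using sM unfolding subspace_def by auto
  define \<delta> where "\<delta> = infdist z M"
  have "M \<noteq> {}" using M0 by auto
  then have "infdist z M \<noteq> 0" using in_closed_iff_infdist_zero[OF cM] zM by blast
  then have dpos: "\<delta> > 0" using infdist_nonneg[of z M] unfolding \<delta>_def by linarith
  define G where "G = {(m + t *\<^sub>R z, t) | m t. m \<in> M}"
  have "goodG (\<lambda>x. (1/\<delta>) * norm x) G" unfolding goodG_def
  proof (intro conjI allI impI)
    fix x a b assume "(x,a) \<in> G" "(x,b) \<in> G"
    then obtain m1 m2 where m: "x = m1 + a *\<^sub>R z" "x = m2 + b *\<^sub>R z" "m1 \<in> M" "m2 \<in> M"
      unfolding G_def by blast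
    show "a = b"
    proof (rule ccontr)
      assume ne: "a \<noteq> b"
      have "(a - b) *\<^sub>R z = m2 - m1" using m(1,2) by (simp add: algebra_simps)
      moreover have "z = (1/(a - b)) *\<^sub>R ((a - b) *\<^sub>R z)" using ne by simp
      ultimately have "z = (1/(a-b)) *\<^sub>R (m2 + (-1) *\<^sub>R m1)" by simp
      moreover have "m2 + (-1) *\<^sub>R m1 \<in> M" by (rule Madd[OF m(4) Mscl[OF m(3)]])
      then have "(1/(a-b)) *\<^sub>R (m2 + (-1) *\<^sub>R m1) \<in> M" by (rule Mscl)
      ultimately show False using zM by simp
    qed
  next
    fix x a y b assume "(x,a) \<in> G" "(y,b) \<in> G"
    then obtain m1 m2 where m: "x = m1 + a *\<^sub>R z" "y = m2 + b *\<^sub>R z" "m1 \<in> M" "m2 \<in> M"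
      unfolding G_def by blast
    then have "(x+y, a+b) = ((m1+m2) + (a+b) *\<^sub>R z, a+b)" by (simp add: algebra_simps)
    then show "(x+y,a+b) \<in> G" unfolding G_def using Madd[OF m(3,4)] by blast
  next
    fix x a c assume "(x,a) \<in> G"
    then obtain m1 where m: "x = m1 + a *\<^sub>R z" "m1 \<in> M" unfolding G_def by blast
    then have "(c *\<^sub>R x, c*a) = (c *\<^sub>R m1 + (c*a) *\<^sub>R z, c*a)" by (simp add: algebra_simps)
    then show "(c *\<^sub>R x, c*a) \<in> G" unfolding G_def using Mscl[OF m(2)] by blast
  next
    fix x a assume "(x,a) \<in> G"
    then obtain m1 where m: "x = m1 + a *\<^sub>R z" "m1 \<in> M" unfolding G_def by blast
    show "a \<le> (1/\<delta>) * norm x"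
    proof (cases "a > 0")
      case False
      have "0 \<le> (1/\<delta>) * norm x" using dpos by simp
      then show ?thesis using False by linarith
    next
      case True
      have mm: "(-(1/a)) *\<^sub>R m1 \<in> M" using Mscl[OF m(2)] .
      have "\<delta> \<le> dist z ((-(1/a)) *\<^sub>R m1)" unfolding \<delta>_def by (rule infdist_le[OF mm])
      also have "(1/a) *\<^sub>R x = (1/a) *\<^sub>R m1 + z"
        using True m(1) by (simp add: scaleR_add_right)
      then have "dist z ((-(1/a)) *\<^sub>R m1) = norm ((1/a) *\<^sub>R x)"
        by (simp add: dist_norm add.commute)
      also have "\<dots> = norm x / a" using True by simp
      finally have "\<delta> * a \<le> norm x" using True by (simp add: field_simps)
      then show ?thesis using dpos by (simp add: field_simps mult.commute)
    qed
  qed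
  moreover have "sublin (\<lambda>x::'a. (1/\<delta>) * norm x)"
    unfolding sublin_def using dpos
    by (auto simp: add_divide_distrib[symmetric] divide_right_mono norm_triangle_ineq)
  ultimately obtain L where L: "linear L" "\<And>x. L x \<le> (1/\<delta>) * norm x" "\<And>x a. (x,a) \<in> G \<Longrightarrow> L x = a"
    using hahn_banach by blast
  obtain f :: "'a \<Rightarrow>\<^sub>L real" where f: "\<forall>x. f x = L x"
    using blinfun_of_dominated[OF L(1) L(2)] dpos by auto
  have "\<forall>m\<in>M. (m, 0) \<in> G"
  proof
    fix m assume "m \<in> M"
    have "(m, 0) = (m + 0 *\<^sub>R z, 0::real)" by simp
    then show "(m, 0) \<in> G" unfolding G_def using \<open>m \<in> M\<close> by blast
  qed
  moreover have "(z, 1) \<in> G"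
  proof -
    have "(z, 1) = (0 + 1 *\<^sub>R z, 1::real)" by simp
    then show ?thesis unfolding G_def using M0 by blast
  qed
  ultimately have "(\<forall>m\<in>M. blinfun_apply f m = 0) \<and> blinfun_apply f z = 1" using f L(3) by simp
  then show ?thesis by blast
qed

lemma subspace_closure_rn:
  fixes S :: "'a::real_normed_vector set"
  assumes "subspace S" shows "subspace (closure S)"
  unfolding subspace_def
proof (intro conjI ballI allI)
  show "0 \<in> closure S" using assms unfolding subspace_def using closure_subset by blast
next
  fix x y assume "x \<in> closure S" "y \<in> closure S"
  then obtain u v where "\<forall>n. u n \<in> S" "u \<longlonglongrightarrow> x" "\<forall>n. v n \<in> S" "v \<longlonglongrightarrow> y"
    unfolding closure_sequential by blast
  then have "\<forall>n. u n + v n \<in> S" "(\<lambda>n. u n + v n) \<longlonglongrightarrow> x + y"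
    using assms unfolding subspace_def by (auto intro: tendsto_add)
  then show "x + y \<in> closure S" unfolding closure_sequential by (intro exI[of _ "\<lambda>n. u n + v n"]) simp
next
  fix c x assume "x \<in> closure S"
  then obtain u where "\<forall>n. u n \<in> S" "u \<longlonglongrightarrow> x"
    unfolding closure_sequential by blast
  then have "\<forall>n. c *\<^sub>R u n \<in> S" "(\<lambda>n. c *\<^sub>R u n) \<longlonglongrightarrow> c *\<^sub>R x"
    using assms unfolding subspace_def by (auto intro: tendsto_scaleR)
  then show "c *\<^sub>R x \<in> closure S" unfolding closure_sequential by (intro exI[of _ "\<lambda>n. c *\<^sub>R u n"]) simp
qed

lemma banach_lim:
  fixes xs :: "nat \<Rightarrow> 'a::real_normed_vector"
  assumes B: "\<And>n. norm (xs n) \<le> B"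
  shows "\<exists>\<phi>::('a \<Rightarrow>\<^sub>L real) \<Rightarrow> real. linear \<phi> \<and> (\<forall>f. \<phi> f \<le> B * norm f) \<and>
          (\<forall>f c. (\<lambda>n. blinfun_apply f (xs n)) \<longlonglongrightarrow> c \<longrightarrow> \<phi> f = c)"
proof -
  define ls where "ls f = limsup (\<lambda>n. ereal (blinfun_apply f (xs n)))" for f :: "'a \<Rightarrow>\<^sub>L real"
  have bnd: "\<bar>blinfun_apply f (xs n)\<bar> \<le> B * norm f" for f n
  proof -
    have "\<bar>blinfun_apply f (xs n)\<bar> \<le> norm f * norm (xs n)" using norm_blinfun[of f "xs n"] by simp
    also have "\<dots> \<le> norm f * B" by (rule mult_left_mono[OF B norm_ge_zero])
    finally show ?thesis by (simp add: mult.commute)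
  qed
  have bu: "blinfun_apply f (xs n) \<le> B * norm f" for f n
    using bnd[of f n] by (simp add: abs_le_iff)
  have bl: "-(B * norm f) \<le> blinfun_apply f (xs n)" for f n
    using bnd[of f n] by (simp add: abs_le_iff)
  have ub: "ls f \<le> ereal (B * norm f)" for f
    unfolding ls_def by (rule Limsup_bounded, rule always_eventually) (simp add: bu)
  have lb: "ereal (-(B * norm f)) \<le> ls f" for f
    unfolding ls_def by (rule le_Limsup, simp, rule always_eventually) (simp add: bl)
  define p where "p f = real_of_ereal (ls f)" for f
  have lsp: "ls f = ereal (p f)" for f
    using ub[of f] lb[of f] unfolding p_def by (cases "ls f") auto
  have pB: "p f \<le> B * norm f" for f using ub[of f] lsp[of f] by simp
  have sp: "sublin p" unfolding sublin_def
  proof (intro conjI allI impI)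
    fix f g :: "'a \<Rightarrow>\<^sub>L real"
    have "ls (f + g) = limsup (\<lambda>n. ereal (blinfun_apply f (xs n)) + ereal (blinfun_apply g (xs n)))"
      unfolding ls_def by (simp add: plus_blinfun.rep_eq)
    also have "\<dots> \<le> ls f + ls g" unfolding ls_def by (rule ereal_limsup_add_mono)
    finally show "p (f + g) \<le> p f + p g" by (simp add: lsp)
  next
    fix c :: real and f :: "'a \<Rightarrow>\<^sub>L real" assume c: "c \<ge> 0"
    have "ls (c *\<^sub>R f) = limsup (\<lambda>n. ereal c * ereal (blinfun_apply f (xs n)))"
      unfolding ls_def by (simp add: scaleR_blinfun.rep_eq)
    also have "\<dots> = ereal c * ls f" unfolding ls_def by (rule limsup_ereal_mult_left[OF c])
    finally show "p (c *\<^sub>R f) = c * p f" by (simp add: lsp)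
  qed
  have "goodG p {}" unfolding goodG_def by simp
  then obtain L where L: "linear L" "\<And>f. L f \<le> p f" using hahn_banach[OF _ sp] by blast
  have conv: "L f = c" if "(\<lambda>n. blinfun_apply f (xs n)) \<longlonglongrightarrow> c" for f c
  proof -
    have "ls f = ereal c" unfolding ls_def
      by (rule lim_imp_Limsup[OF trivial_limit_sequentially]) (use that in \<open>rule tendsto_ereal\<close>)
    then have 1: "p f = c" using lsp[of f] by simp
    have "(\<lambda>n. blinfun_apply (- f) (xs n)) \<longlonglongrightarrow> - c" using tendsto_minus[OF that] by (simp add: uminus_blinfun.rep_eq)
    then have "ls (- f) = ereal (- c)" unfolding ls_def
      by (intro lim_imp_Limsup[OF trivial_limit_sequentially] tendsto_ereal)
    then have 2: "p (- f) = - c" using lsp[of "- f"] by simp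
    have "L (- f) = - L f" using linear_neg[OF L(1)] .
    then show ?thesis using L(2)[of f] L(2)[of "-f"] 1 2 by linarith
  qed
  show ?thesis using L(1) L(2) pB conv by (intro exI[of _ L]) (auto intro: order_trans)
qed

lemma weak_cluster:
  fixes xs :: "nat \<Rightarrow> 'a::real_normed_vector"
  assumes refl: "reflexive_space TYPE('a)" and B: "\<And>n. norm (xs n) \<le> B"
  shows "\<exists>x::'a. \<forall>(f::'a \<Rightarrow>\<^sub>L real) c. (\<lambda>n. blinfun_apply f (xs n)) \<longlonglongrightarrow> c \<longrightarrow> blinfun_apply f x = c"
proof -
  obtain \<phi> :: "('a \<Rightarrow>\<^sub>L real) \<Rightarrow> real" where \<phi>: "linear \<phi>" "\<And>f. \<phi> f \<le> B * norm f"
    "\<And>f c. (\<lambda>n. blinfun_apply f (xs n)) \<longlonglongrightarrow> c \<Longrightarrow> \<phi> f = c"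
    using banach_lim[of xs B, OF B] by blast
  have B0: "B \<ge> 0" using B[of 0] norm_ge_zero[of "xs 0"] by linarith
  obtain \<Phi> :: "('a \<Rightarrow>\<^sub>L real) \<Rightarrow>\<^sub>L real" where \<Phi>: "\<forall>f. blinfun_apply \<Phi> f = \<phi> f"
    using blinfun_of_dominated[OF \<phi>(1) \<phi>(2) B0] by blast
  obtain x :: 'a where x: "\<forall>f. blinfun_apply \<Phi> f = blinfun_apply f x"
    using refl unfolding reflexive_space_def by (elim allE[of _ \<Phi>]) blast
  have "blinfun_apply f x = c" if "(\<lambda>n. blinfun_apply f (xs n)) \<longlonglongrightarrow> c" for f :: "'a \<Rightarrow>\<^sub>L real" and c
  proof -
    have "blinfun_apply f x = blinfun_apply \<Phi> f" using x by simp
    also have "\<dots> = \<phi> f" using \<Phi> by simp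
    also have "\<dots> = c" by (rule \<phi>(3)[OF that])
    finally show ?thesis .
  qed
  then show ?thesis by blast
qed

primrec Dn :: "(nat \<Rightarrow> 'a::real_normed_vector) \<Rightarrow> nat \<Rightarrow> 'a set" where
  "Dn xs 0 = {0}"
| "Dn xs (Suc k) = (\<lambda>(q,i,d). q *\<^sub>R xs i + d) ` (\<rat> \<times> (UNIV::nat set) \<times> Dn xs k)"

lemma Dn_countable: "countable (Dn xs k)"
proof (induction k)
  case 0 then show ?case by simp
next
  case (Suc k)
  have "countable (\<rat> \<times> (UNIV::nat set) \<times> Dn xs k)"
    using Suc countable_rat by (intro countable_SIGMA) auto
  then show ?case unfolding Dn.simps by (rule countable_image)
qed

lemma Dn_dense:
  assumes "x \<in> span (range xs)"
  shows "x \<in> closure (\<Union>k. Dn xs k)"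
  using assms
proof (induction rule: span_induct_alt)
  case base
  have "0 \<in> (\<Union>k. Dn xs k)" by (rule UN_I[of 0]) simp_all
  then show ?case by (rule subsetD[OF closure_subset])
next
  case (step c z y)
  then obtain i where zi: "z = xs i" by (auto simp: image_iff)
  show ?case unfolding closure_approachable
  proof (intro allI impI)
    fix e :: real assume e: "e > 0"
    obtain d where dD: "d \<in> (\<Union>k. Dn xs k)" and dd: "dist d y < e/2"
      using step(2) e unfolding closure_approachable by (meson half_gt_zero)
    then obtain k where dk: "d \<in> Dn xs k" by blast
    define K where "K = norm (xs i) + 1"
    have K: "K > 0" unfolding K_def by (simp add: add_nonneg_pos)
    obtain q where q: "q \<in> \<rat>" "c < q" "q < c + e/(2*K)"
      using Rats_dense_in_real[of c "c + e/(2*K)"] e K by auto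
    have "(q,i,d) \<in> \<rat> \<times> (UNIV::nat set) \<times> Dn xs k" using dk q(1) by simp
    then have "(\<lambda>(q,i,d). q *\<^sub>R xs i + d) (q,i,d) \<in> Dn xs (Suc k)" unfolding Dn.simps by (rule imageI)
    then have "q *\<^sub>R xs i + d \<in> Dn xs (Suc k)" by simp
    then have mem: "q *\<^sub>R xs i + d \<in> (\<Union>k. Dn xs k)" by blast
    have "dist (q *\<^sub>R xs i + d) (c *\<^sub>R z + y) = norm ((q - c) *\<^sub>R xs i + (d - y))"
      unfolding dist_norm zi by (simp add: algebra_simps)
    also have "\<dots> \<le> norm ((q - c) *\<^sub>R xs i) + norm (d - y)" by (rule norm_triangle_ineq)
    also have "\<dots> = \<bar>q - c\<bar> * norm (xs i) + dist d y" by (simp add: dist_norm)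
    finally have A: "dist (q *\<^sub>R xs i + d) (c *\<^sub>R z + y) \<le> \<bar>q - c\<bar> * norm (xs i) + dist d y" .
    have "\<bar>q - c\<bar> \<le> e/(2*K)" using q by simp
    moreover have "norm (xs i) \<le> K" unfolding K_def by simp
    ultimately have "\<bar>q - c\<bar> * norm (xs i) \<le> (e/(2*K)) * K" by (intro mult_mono) auto
    also have "(e/(2*K)) * K = e/2" using K by simp
    finally have Bq: "\<bar>q - c\<bar> * norm (xs i) \<le> e/2" .
    have "dist (q *\<^sub>R xs i + d) (c *\<^sub>R z + y) < e" using A Bq dd by linarith
    then show "\<exists>w\<in>\<Union>k. Dn xs k. dist w (c *\<^sub>R z + y) < e" using mem by blast
  qed
qed

lemma not_tendsto_subseq:
  fixes u :: "nat \<Rightarrow> real"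
  assumes "\<not> u \<longlonglongrightarrow> a"
  shows "\<exists>e>0. \<exists>s::nat \<Rightarrow> nat. strict_mono s \<and> (\<forall>n. e \<le> dist (u (s n)) a)"
proof -
  from assms obtain e where e: "e > 0" "\<not> eventually (\<lambda>n. dist (u n) a < e) sequentially"
    unfolding tendsto_iff by blast
  have "infinite {n. e \<le> dist (u n) a}"
  proof
    assume "finite {n. e \<le> dist (u n) a}"
    from finite_nat_bounded[OF this] obtain N where N: "{n. e \<le> dist (u n) a} \<subseteq> {..<N}" ..
    have "\<forall>n\<ge>N. dist (u n) a < e"
    proof (intro allI impI)
      fix n assume "N \<le> n"
      then have "n \<notin> {n. e \<le> dist (u n) a}" using N by auto
      then show "dist (u n) a < e" by simp
    qed
    then have "eventually (\<lambda>n. dist (u n) a < e) sequentially"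
      unfolding eventually_sequentially by blast
    then show False using e by blast
  qed
  then have "\<exists>s::nat \<Rightarrow> nat. strict_mono s \<and> (\<forall>n. s n \<in> {n. e \<le> dist (u n) a})" by (rule infinite_enumerate)
  then show ?thesis using e(1) by auto
qed

theorem wsc:
  fixes xs :: "nat \<Rightarrow> 'a::real_normed_vector"
  assumes refl: "reflexive_space TYPE('a)" and B: "\<And>n. norm (xs n) \<le> B"
  shows "\<exists>r::nat\<Rightarrow>nat. \<exists>x. strict_mono r \<and> weakly_converges (xs \<circ> r) x"
proof -
  define D where "D = (\<Union>k. Dn xs k)"
  have Dc: "countable D" unfolding D_def using Dn_countable by (intro countable_UN) auto
  have D0: "0 \<in> D" unfolding D_def by (rule UN_I[of 0]) simp_all
  have Dne: "D \<noteq> {}" using D0 by blast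
  define d where "d = from_nat_into D"
  have rd: "range d = D" unfolding d_def using Dne Dc by simp
  define fk where "fk k = (SOME f::'a \<Rightarrow>\<^sub>L real. norm f \<le> 1 \<and> blinfun_apply f (d k) = norm (d k))" for k
  have fk: "norm (fk k) \<le> 1 \<and> blinfun_apply (fk k) (d k) = norm (d k)" for k
    unfolding fk_def by (rule someI_ex[OF hb_norm[of "d k"]])
  define M where "M = closure (span (range xs))"
  have sM: "subspace M" unfolding M_def by (intro subspace_closure_rn subspace_span)
  have cM: "closed M" unfolding M_def by simp
  have xsM: "xs n \<in> M" for n
  proof -
    have "xs n \<in> span (range xs)" by (intro span_base) simp
    then show ?thesis unfolding M_def by (rule subsetD[OF closure_subset])
  qed
  have "span (range xs) \<subseteq> closure D" unfolding D_def using Dn_dense by blast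
  then have MD: "M \<subseteq> closure D" unfolding M_def using closure_mono closure_closure by metis
  have norming: "m = 0" if mM: "m \<in> M" and z: "\<And>k. blinfun_apply (fk k) m = 0" for m
  proof (rule ccontr)
    assume "m \<noteq> 0"
    then have e: "norm m / 3 > 0" by simp
    have "m \<in> closure D" using mM MD by blast
    then obtain y where "y \<in> D" "dist y m < norm m / 3" using e unfolding closure_approachable by blast
    then obtain k where yk: "y = d k" using rd by blast
    have "norm (d k) = blinfun_apply (fk k) (d k)" using fk[of k] by simp
    also have "\<dots> = blinfun_apply (fk k) (d k - m)" using z[of k] by (simp add: blinfun.diff_right)
    also have "\<dots> \<le> norm (blinfun_apply (fk k) (d k - m))" by simp
    also have "\<dots> \<le> norm (fk k) * norm (d k - m)" by (rule norm_blinfun)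
    also have "\<dots> \<le> 1 * norm (d k - m)" using fk[of k] by (intro mult_right_mono) auto
    finally have 1: "norm (d k) \<le> dist y m" using yk by (simp add: dist_norm)
    have "norm m \<le> norm (d k) + norm (d k - m)" using norm_triangle_ineq4[of "d k" "d k - m"] by simp
    then have "norm m \<le> 2 * dist y m" using 1 yk by (simp add: dist_norm)
    then show False using \<open>dist y m < norm m / 3\<close> e by linarith
  qed
  have bnd: "\<bar>blinfun_apply f (xs n)\<bar> \<le> norm f * B" for f :: "'a \<Rightarrow>\<^sub>L real" and n
  proof -
    have "\<bar>blinfun_apply f (xs n)\<bar> \<le> norm f * norm (xs n)" using norm_blinfun[of f "xs n"] by simp
    also have "\<dots> \<le> norm f * B" by (rule mult_left_mono[OF B norm_ge_zero])
    finally show ?thesis .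
  qed
  have bddseq: "bounded (range (\<lambda>i. blinfun_apply f (xs (s i))))" for f :: "'a \<Rightarrow>\<^sub>L real" and s :: "nat \<Rightarrow> nat"
    unfolding bounded_iff using bnd by (intro exI[of _ "norm f * B"]) auto
  interpret S: subseqs "\<lambda>k s. convergent (\<lambda>i. blinfun_apply (fk k) (xs (s i)))"
  proof
    fix k and s :: "nat \<Rightarrow> nat" assume "strict_mono s"
    obtain l and r :: "nat \<Rightarrow> nat" where lr: "strict_mono r" "((\<lambda>i. blinfun_apply (fk k) (xs (s i))) \<circ> r) \<longlonglongrightarrow> l"
      using bounded_imp_convergent_subsequence[OF bddseq[of "fk k" s]] by blast
    then show "\<exists>r'. strict_mono r' \<and> convergent (\<lambda>i. blinfun_apply (fk k) (xs ((s \<circ> r') i)))"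
      by (intro exI[of _ r]) (auto simp: convergent_def o_def)
  qed
  define r where "r = S.diagseq"
  have rmono: "strict_mono r" unfolding r_def by (rule S.subseq_diagseq)
  have conv_k: "convergent (\<lambda>i. blinfun_apply (fk k) (xs (r i)))" for k
  proof -
    have "convergent (\<lambda>i. blinfun_apply (fk k) (xs ((S.diagseq \<circ> (+) (Suc k)) i)))"
    proof (rule S.diagseq_holds)
      fix r' :: "nat \<Rightarrow> nat" and s :: "nat \<Rightarrow> nat" and n
      assume "strict_mono r'" "convergent (\<lambda>i. blinfun_apply (fk n) (xs (s i)))"
      then have "convergent ((\<lambda>i. blinfun_apply (fk n) (xs (s i))) \<circ> r')"
        using convergent_subseq_convergent by blast
      then show "convergent (\<lambda>i. blinfun_apply (fk n) (xs ((s \<circ> r') i)))" by (simp add: o_def)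
    qed
    then obtain L where "(\<lambda>i. blinfun_apply (fk k) (xs (S.diagseq (i + Suc k)))) \<longlonglongrightarrow> L"
      unfolding convergent_def by (auto simp: o_def add.commute)
    then have "(\<lambda>i. blinfun_apply (fk k) (xs (S.diagseq i))) \<longlonglongrightarrow> L"
      by (rule LIMSEQ_offset)
    then show ?thesis unfolding r_def convergent_def by blast
  qed
  define ys where "ys = xs \<circ> r"
  have ysB: "norm (ys n) \<le> B" for n unfolding ys_def using B by simp
  have ysM: "ys n \<in> M" for n unfolding ys_def using xsM by simp
  obtain x where x: "\<And>(f::'a\<Rightarrow>\<^sub>L real) c. (\<lambda>n. blinfun_apply f (ys n)) \<longlonglongrightarrow> c \<Longrightarrow> blinfun_apply f x = c"
    using weak_cluster[where xs=ys and B=B, OF refl ysB] by blast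
  have "weakly_converges ys x"
    unfolding weakly_converges_def
  proof (rule allI, rule ccontr)
    fix f :: "'a \<Rightarrow>\<^sub>L real"
    assume nc: "\<not> (\<lambda>n. blinfun_apply f (ys n)) \<longlonglongrightarrow> blinfun_apply f x"
    obtain e and s :: "nat \<Rightarrow> nat" where e: "e > 0" "strict_mono s" "\<And>n. e \<le> dist (blinfun_apply f (ys (s n))) (blinfun_apply f x)"
      using not_tendsto_subseq[OF nc] by blast
    have "bounded (range (\<lambda>n. blinfun_apply f (ys (s n))))"
      unfolding ys_def o_def using bddseq[of f "\<lambda>n. r (s n)"] by simp
    then obtain a and t :: "nat \<Rightarrow> nat" where t: "strict_mono t" "((\<lambda>n. blinfun_apply f (ys (s n))) \<circ> t) \<longlonglongrightarrow> a"
      using bounded_imp_convergent_subsequence by blast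
    define zs where "zs = ys \<circ> (s \<circ> t)"
    have zsB: "norm (zs n) \<le> B" for n unfolding zs_def using ysB by simp
    have zsM: "zs n \<in> M" for n unfolding zs_def using ysM by simp
    obtain x' where x': "\<And>(g::'a\<Rightarrow>\<^sub>L real) c. (\<lambda>n. blinfun_apply g (zs n)) \<longlonglongrightarrow> c \<Longrightarrow> blinfun_apply g x' = c"
      using weak_cluster[where xs=zs and B=B, OF refl zsB] by blast
    have fz: "(\<lambda>n. blinfun_apply f (zs n)) \<longlonglongrightarrow> a" using t(2) unfolding zs_def by (simp add: o_def)
    have fx': "blinfun_apply f x' = a" by (rule x'[OF fz])
    have "(\<lambda>n. dist (blinfun_apply f (zs n)) (blinfun_apply f x)) \<longlonglongrightarrow> dist a (blinfun_apply f x)"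
      by (intro tendsto_dist fz tendsto_const)
    moreover have "\<forall>n. e \<le> dist (blinfun_apply f (zs n)) (blinfun_apply f x)"
      unfolding zs_def using e(3) by simp
    ultimately have ea: "e \<le> dist a (blinfun_apply f x)"
      by (intro LIMSEQ_le_const[of _ _ e]) auto
    have st: "strict_mono (s \<circ> t)" by (rule strict_mono_o[OF e(2) t(1)])
    have same_k: "blinfun_apply (fk k) x' = blinfun_apply (fk k) x" for k
    proof -
      obtain Lk where Lk: "(\<lambda>i. blinfun_apply (fk k) (ys i)) \<longlonglongrightarrow> Lk"
        using conv_k[of k] unfolding ys_def convergent_def by (auto simp: o_def)
      have 1: "blinfun_apply (fk k) x = Lk" by (rule x[OF Lk])
      have "((\<lambda>i. blinfun_apply (fk k) (ys i)) \<circ> (s \<circ> t)) \<longlonglongrightarrow> Lk"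
        by (rule LIMSEQ_subseq_LIMSEQ[OF Lk st])
      then have "(\<lambda>n. blinfun_apply (fk k) (zs n)) \<longlonglongrightarrow> Lk" unfolding zs_def by (simp add: o_def)
      then have "blinfun_apply (fk k) x' = Lk" by (rule x')
      then show ?thesis using 1 by simp
    qed
    have inM: "x - x' \<in> M"
    proof (rule ccontr)
      assume "x - x' \<notin> M"
      obtain g :: "'a \<Rightarrow>\<^sub>L real" where g: "\<forall>m\<in>M. blinfun_apply g m = 0" "blinfun_apply g (x - x') = 1"
        using hb_sep[OF sM cM \<open>x - x' \<notin> M\<close>] by blast
      have "(\<lambda>n. blinfun_apply g (ys n)) = (\<lambda>n. 0)" using g(1) ysM by auto
      then have "(\<lambda>n. blinfun_apply g (ys n)) \<longlonglongrightarrow> 0" by simp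
      then have g1: "blinfun_apply g x = 0" by (rule x)
      have "(\<lambda>n. blinfun_apply g (zs n)) = (\<lambda>n. 0)" using g(1) zsM by auto
      then have "(\<lambda>n. blinfun_apply g (zs n)) \<longlonglongrightarrow> 0" by simp
      then have g2: "blinfun_apply g x' = 0" by (rule x')
      have "blinfun_apply g (x - x') = 0" using g1 g2 by (simp add: blinfun.diff_right)
      then show False using g(2) by simp
    qed
    have "x - x' = 0" by (rule norming[OF inM]) (simp add: blinfun.diff_right same_k)
    then have "x = x'" by simp
    then have "dist a (blinfun_apply f x) = 0" using fx' by simp
    with ea e(1) show False by simp
  qed
  then show ?thesis using rmono unfolding ys_def by blast
qed

lemma part1:
  fixes T :: "'a::real_normed_vector \<Rightarrow>\<^sub>L 'b::real_normed_vector"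
  assumes refl: "reflexive_space TYPE('a)" and kk: "kadets_klee TYPE('a)"
    and cT: "compact_operator T" and nT: "norm T = 1" and ep: "\<epsilon> > 0"
  shows "uniform_BPB_approx T T \<epsilon>"
proof (rule ccontr)
  assume neg: "\<not> uniform_BPB_approx T T \<epsilon>"
  have H: "\<not>(\<exists>\<delta>>0. \<forall>x0. norm x0 = 1 \<and> norm (blinfun_apply T x0) > 1 - \<delta> \<longrightarrow>
        (\<exists>u0. norm u0 = 1 \<and> norm (blinfun_apply T u0) = 1 \<and> norm (u0 - x0) < \<epsilon>))"
    using neg nT ep unfolding uniform_BPB_approx_def by auto
  have "\<forall>n::nat. \<exists>x0. norm x0 = 1 \<and> norm (blinfun_apply T x0) > 1 - 1/real (Suc n) \<and>
          (\<forall>u0. norm u0 = 1 \<longrightarrow> norm (blinfun_apply T u0) = 1 \<longrightarrow> \<epsilon> \<le> norm (u0 - x0))"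
  proof
    fix n :: nat
    have pos: "1/real (Suc n) > 0" by simp
    have "\<not> (\<forall>x0. norm x0 = 1 \<and> norm (blinfun_apply T x0) > 1 - 1/real (Suc n) \<longrightarrow>
        (\<exists>u0. norm u0 = 1 \<and> norm (blinfun_apply T u0) = 1 \<and> norm (u0 - x0) < \<epsilon>))"
      using H pos by blast
    then show "\<exists>x0. norm x0 = 1 \<and> norm (blinfun_apply T x0) > 1 - 1/real (Suc n) \<and>
          (\<forall>u0. norm u0 = 1 \<longrightarrow> norm (blinfun_apply T u0) = 1 \<longrightarrow> \<epsilon> \<le> norm (u0 - x0))"
      by (auto simp: not_less)
  qed
  from choice[OF this] obtain xs where xs: "\<forall>n. norm (xs n) = 1 \<and> norm (blinfun_apply T (xs n)) > 1 - 1/real (Suc n) \<and>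
          (\<forall>u0. norm u0 = 1 \<longrightarrow> norm (blinfun_apply T u0) = 1 \<longrightarrow> \<epsilon> \<le> norm (u0 - xs n))"
    by blast
  have xs1: "norm (xs n) = 1" for n using xs by blast
  have xs2: "norm (blinfun_apply T (xs n)) > 1 - 1/real (Suc n)" for n using xs by blast
  have xs3: "\<And>u0. norm u0 = 1 \<Longrightarrow> norm (blinfun_apply T u0) = 1 \<Longrightarrow> \<epsilon> \<le> norm (u0 - xs n)" for n
    using xs by blast
  define K where "K = closure (blinfun_apply T ` cball 0 1)"
  have sc: "seq_compact K" using cT unfolding compact_operator_def K_def by (rule compact_imp_seq_compact)
  have sc': "\<And>f. \<forall>n. f n \<in> K \<Longrightarrow> \<exists>l\<in>K. \<exists>r::nat\<Rightarrow>nat. strict_mono r \<and> (f \<circ> r) \<longlonglongrightarrow> l"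
    using sc unfolding seq_compact_def by blast
  have mem: "\<forall>n. blinfun_apply T (xs n) \<in> K"
  proof
    fix n
    have "xs n \<in> cball 0 1" using xs1[of n] by simp
    then have "blinfun_apply T (xs n) \<in> blinfun_apply T ` cball 0 1" by (rule imageI)
    then show "blinfun_apply T (xs n) \<in> K" unfolding K_def by (rule subsetD[OF closure_subset])
  qed
  from sc'[OF mem] obtain y and r1 :: "nat \<Rightarrow> nat" where r1: "strict_mono r1" "((\<lambda>n. blinfun_apply T (xs n)) \<circ> r1) \<longlonglongrightarrow> y"
    by (elim bexE exE conjE)
  have "\<And>n. norm ((xs \<circ> r1) n) \<le> 1" using xs1 by simp
  then obtain r2 :: "nat \<Rightarrow> nat" and x where r2: "strict_mono r2" "weakly_converges ((xs \<circ> r1) \<circ> r2) x"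
    using wsc[where xs="xs \<circ> r1" and B=1, OF refl] by blast
  define \<rho> where "\<rho> = r1 \<circ> r2"
  have \<rho>: "strict_mono \<rho>" unfolding \<rho>_def by (rule strict_mono_o[OF r1(1) r2(1)])
  define zs where "zs n = xs (\<rho> n)" for n
  have wz: "weakly_converges zs x" using r2(2) unfolding zs_def \<rho>_def by (simp add: o_def comp_def)
  have zs1: "norm (zs n) = 1" for n unfolding zs_def using xs1 by simp
  have Tz: "(\<lambda>n. blinfun_apply T (zs n)) \<longlonglongrightarrow> y"
  proof -
    have "(((\<lambda>n. blinfun_apply T (xs n)) \<circ> r1) \<circ> r2) \<longlonglongrightarrow> y" by (rule LIMSEQ_subseq_LIMSEQ[OF r1(2) r2(1)])
    then show ?thesis unfolding zs_def \<rho>_def by (simp add: o_def)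
  qed
  have Tle: "norm (blinfun_apply T u) \<le> norm u" for u
    using norm_blinfun[of T u] nT by simp
  have ny: "norm y = 1"
  proof -
    have lo: "1 - inverse (real (Suc n)) \<le> norm (blinfun_apply T (zs n))" for n
    proof -
      have "n \<le> \<rho> n" by (rule seq_suble[OF \<rho>])
      then have "inverse (real (Suc (\<rho> n))) \<le> inverse (real (Suc n))"
        by (intro le_imp_inverse_le) auto
      moreover have "norm (blinfun_apply T (zs n)) > 1 - 1/real (Suc (\<rho> n))"
        unfolding zs_def by (rule xs2)
      ultimately show ?thesis by (simp add: inverse_eq_divide)
    qed
    have hi: "norm (blinfun_apply T (zs n)) \<le> 1" for n using Tle[of "zs n"] zs1[of n] by simp
    have "(\<lambda>n. 1 - inverse (real (Suc n))) \<longlonglongrightarrow> 1 - 0"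
      by (intro tendsto_diff tendsto_const LIMSEQ_inverse_real_of_nat)
    then have lim1: "(\<lambda>n. 1 - inverse (real (Suc n))) \<longlonglongrightarrow> 1" by simp
    have ev1: "eventually (\<lambda>n. 1 - inverse (real (Suc n)) \<le> norm (blinfun_apply T (zs n))) sequentially"
      using lo by (intro always_eventually allI)
    have ev2: "eventually (\<lambda>n. norm (blinfun_apply T (zs n)) \<le> 1) sequentially"
      using hi by (intro always_eventually allI)
    have "(\<lambda>n. norm (blinfun_apply T (zs n))) \<longlonglongrightarrow> 1"
      by (rule tendsto_sandwich[OF ev1 ev2 lim1 tendsto_const])
    moreover have "(\<lambda>n. norm (blinfun_apply T (zs n))) \<longlonglongrightarrow> norm y" by (rule tendsto_norm[OF Tz])
    ultimately show ?thesis using LIMSEQ_unique by metis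
  qed
  have Txy: "blinfun_apply T x = y"
  proof -
    obtain g :: "'b \<Rightarrow>\<^sub>L real" where g: "norm g \<le> 1" "blinfun_apply g (blinfun_apply T x - y) = norm (blinfun_apply T x - y)"
      using hb_norm by blast
    have "(\<lambda>n. blinfun_apply (g o\<^sub>L T) (zs n)) \<longlonglongrightarrow> blinfun_apply (g o\<^sub>L T) x"
      using wz unfolding weakly_converges_def by blast
    then have 1: "(\<lambda>n. blinfun_apply g (blinfun_apply T (zs n))) \<longlonglongrightarrow> blinfun_apply g (blinfun_apply T x)" by simp
    have 2: "(\<lambda>n. blinfun_apply g (blinfun_apply T (zs n))) \<longlonglongrightarrow> blinfun_apply g y"
      by (rule blinfun.tendsto[OF tendsto_const Tz])
    have "blinfun_apply g (blinfun_apply T x) = blinfun_apply g y" using LIMSEQ_unique[OF 1 2] .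
    then have "norm (blinfun_apply T x - y) = 0" using g(2) by (simp add: blinfun.diff_right)
    then show ?thesis by simp
  qed
  have nx: "norm x = 1"
  proof -
    obtain h :: "'a \<Rightarrow>\<^sub>L real" where h: "norm h \<le> 1" "blinfun_apply h x = norm x" using hb_norm by blast
    have "(\<lambda>n. blinfun_apply h (zs n)) \<longlonglongrightarrow> blinfun_apply h x"
      using wz unfolding weakly_converges_def by blast
    moreover have "blinfun_apply h (zs n) \<le> 1" for n
    proof -
      have "blinfun_apply h (zs n) \<le> norm (blinfun_apply h (zs n))" by simp
      also have "\<dots> \<le> norm h * norm (zs n)" by (rule norm_blinfun)
      also have "\<dots> \<le> 1" using h(1) zs1[of n] by simp
      finally show ?thesis .
    qed
    ultimately have "blinfun_apply h x \<le> 1" by (intro LIMSEQ_le_const2[of _ _ 1]) auto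
    then have a: "norm x \<le> 1" using h(2) by simp
    have "1 = norm (blinfun_apply T x)" using ny Txy by simp
    also have "\<dots> \<le> norm x" by (rule Tle)
    finally show ?thesis using a by simp
  qed
  have "(\<lambda>n. norm (zs n)) \<longlonglongrightarrow> norm x" using zs1 nx by simp
  then have "(\<lambda>n. norm (zs n - x)) \<longlonglongrightarrow> 0" using kk wz unfolding kadets_klee_def by blast
  then have "eventually (\<lambda>n. norm (zs n - x) < \<epsilon>) sequentially"
    using ep by (rule order_tendstoD(2))
  then obtain N where N: "norm (zs N - x) < \<epsilon>" unfolding eventually_sequentially by blast
  have "\<epsilon> \<le> norm (x - xs (\<rho> N))" by (rule xs3) (use nx Txy ny in simp_all)
  also have "\<dots> = norm (zs N - x)" unfolding zs_def by (rule norm_minus_commute)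
  finally show False using N by simp
qed

lemma fd_seq_compact:
  fixes B :: "'a::real_normed_vector set"
  assumes "finite B"
  shows "\<forall>ys. (\<forall>n. ys n \<in> span B) \<longrightarrow> bounded (range ys) \<longrightarrow>
           (\<exists>l\<in>span B. \<exists>r::nat\<Rightarrow>nat. strict_mono r \<and> (ys \<circ> r) \<longlonglongrightarrow> l)"
  using assms
proof (induction B rule: finite_induct)
  case empty
  show ?case
  proof (intro allI impI)
    fix ys :: "nat \<Rightarrow> 'a" assume "\<forall>n. ys n \<in> span {}"
    then have "ys = (\<lambda>n. 0)" by auto
    then have "(ys \<circ> id) \<longlonglongrightarrow> 0" by simp
    moreover have "strict_mono (id :: nat \<Rightarrow> nat)" by (simp add: strict_mono_def)
    moreover have "(0::'a) \<in> span {}" by simp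
    ultimately show "\<exists>l\<in>span {}. \<exists>r::nat\<Rightarrow>nat. strict_mono r \<and> (ys \<circ> r) \<longlonglongrightarrow> l" by blast
  qed
next
  case (insert b B)
  note IH = insert.IH
  have clo: "closed (span B)" unfolding closed_sequential_limits
  proof (intro allI impI, elim conjE)
    fix u l assume u: "\<forall>n. u n \<in> span B" "u \<longlonglongrightarrow> l"
    have "bounded (range u)" by (rule convergent_imp_bounded[OF u(2)])
    then obtain l' and r :: "nat \<Rightarrow> nat" where l': "l' \<in> span B" "strict_mono r" "(u \<circ> r) \<longlonglongrightarrow> l'"
      using IH u(1) by blast
    have "(u \<circ> r) \<longlonglongrightarrow> l" by (rule LIMSEQ_subseq_LIMSEQ[OF u(2) l'(2)])
    then have "l = l'" using l'(3) LIMSEQ_unique by blast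
    then show "l \<in> span B" using l'(1) by simp
  qed
  show ?case
  proof (intro allI impI)
    fix ys :: "nat \<Rightarrow> 'a" assume ysin: "\<forall>n. ys n \<in> span (insert b B)" and bd: "bounded (range ys)"
    show "\<exists>l\<in>span (insert b B). \<exists>r::nat\<Rightarrow>nat. strict_mono r \<and> (ys \<circ> r) \<longlonglongrightarrow> l"
    proof (cases "b \<in> span B")
      case True
      then have eq: "span (insert b B) = span B" by (rule span_redundant)
      have ysB: "\<And>n. ys n \<in> span B" using ysin eq by simp
      have "\<exists>l\<in>span B. \<exists>r::nat\<Rightarrow>nat. strict_mono r \<and> (ys \<circ> r) \<longlonglongrightarrow> l"
        using IH[rule_format, OF ysB bd] .
      then show ?thesis using eq by simp
    next
      case False
      define \<delta> where "\<delta> = infdist b (span B)"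
      have "span B \<noteq> {}" using span_zero by blast
      then have "infdist b (span B) \<noteq> 0" using in_closed_iff_infdist_zero[OF clo] False by blast
      then have dpos: "\<delta> > 0" using infdist_nonneg[of b "span B"] unfolding \<delta>_def by linarith
      have "\<forall>n. \<exists>k. ys n - k *\<^sub>R b \<in> span B" using ysin span_insert[of b B] by blast
      from choice[OF this] obtain k where k: "\<And>n. ys n - k n *\<^sub>R b \<in> span B" by blast
      define v where "v n = ys n - k n *\<^sub>R b" for n
      have vB: "v n \<in> span B" for n unfolding v_def by (rule k)
      obtain C where C: "\<And>n. norm (ys n) \<le> C" using bd unfolding bounded_iff by blast
      have kb: "\<bar>k n\<bar> * \<delta> \<le> norm (ys n)" for n
      proof (cases "k n = 0")
        case True then show ?thesis by simp
      next
        case False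
        have mm: "(-(1/k n)) *\<^sub>R v n \<in> span B" by (rule span_mul[OF vB])
        have "\<delta> \<le> dist b ((-(1/k n)) *\<^sub>R v n)" unfolding \<delta>_def by (rule infdist_le[OF mm])
        also have "b - (-(1/k n)) *\<^sub>R v n = (1/k n) *\<^sub>R ys n"
          using False unfolding v_def by (simp add: algebra_simps)
        then have "dist b ((-(1/k n)) *\<^sub>R v n) = norm (ys n) / \<bar>k n\<bar>"
          by (simp add: dist_norm)
        finally have "\<delta> \<le> norm (ys n) / \<bar>k n\<bar>" .
        then show ?thesis using False by (simp add: field_simps)
      qed
      have kC: "\<bar>k n\<bar> \<le> C / \<delta>" for n
        using kb[of n] C[of n] dpos by (simp add: field_simps)
      have "bounded (range k)" unfolding bounded_iff using kC by (intro exI[of _ "C/\<delta>"]) auto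
      then obtain \<kappa> and r1 :: "nat \<Rightarrow> nat" where r1: "strict_mono r1" "(k \<circ> r1) \<longlonglongrightarrow> \<kappa>"
        using bounded_imp_convergent_subsequence by blast
      have vC: "norm (v n) \<le> C + C / \<delta> * norm b" for n
      proof -
        have "norm (v n) \<le> norm (ys n) + norm (k n *\<^sub>R b)" unfolding v_def by (rule norm_triangle_ineq4)
        also have "\<dots> \<le> C + C / \<delta> * norm b"
        proof (rule add_mono)
          show "norm (ys n) \<le> C" by (rule C)
          have "\<bar>k n\<bar> * norm b \<le> C / \<delta> * norm b" by (rule mult_right_mono[OF kC norm_ge_zero])
          then show "norm (k n *\<^sub>R b) \<le> C / \<delta> * norm b" by simp
        qed
        finally show ?thesis .
      qed
      have "bounded (range (v \<circ> r1))" unfolding bounded_iff using vC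
        by (intro exI[of _ "C + C / \<delta> * norm b"]) auto
      moreover have "\<forall>n. (v \<circ> r1) n \<in> span B" using vB by simp
      ultimately obtain w and r2 :: "nat \<Rightarrow> nat" where r2: "w \<in> span B" "strict_mono r2" "((v \<circ> r1) \<circ> r2) \<longlonglongrightarrow> w"
        using IH by blast
      have kk: "((k \<circ> r1) \<circ> r2) \<longlonglongrightarrow> \<kappa>" by (rule LIMSEQ_subseq_LIMSEQ[OF r1(2) r2(2)])
      have "(\<lambda>n. ((k \<circ> r1) \<circ> r2) n *\<^sub>R b + ((v \<circ> r1) \<circ> r2) n) \<longlonglongrightarrow> \<kappa> *\<^sub>R b + w"
        by (intro tendsto_add tendsto_scaleR kk r2(3) tendsto_const)
      moreover have "(\<lambda>n. ((k \<circ> r1) \<circ> r2) n *\<^sub>R b + ((v \<circ> r1) \<circ> r2) n) = ys \<circ> (r1 \<circ> r2)"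
        by (auto simp: v_def)
      ultimately have lim: "(ys \<circ> (r1 \<circ> r2)) \<longlonglongrightarrow> \<kappa> *\<^sub>R b + w" by simp
      have "\<kappa> *\<^sub>R b + w \<in> span (insert b B)"
      proof (rule span_add)
        show "\<kappa> *\<^sub>R b \<in> span (insert b B)" by (intro span_mul span_base) simp
        show "w \<in> span (insert b B)" using r2(1) span_mono[of B "insert b B"] by blast
      qed
      moreover have "strict_mono (r1 \<circ> r2)" by (rule strict_mono_o[OF r1(1) r2(2)])
      ultimately show ?thesis using lim by blast
    qed
  qed
qed

lemma fd_compact_operator:
  fixes T :: "'a::real_normed_vector \<Rightarrow>\<^sub>L 'b::real_normed_vector"
  assumes fd: "finite_dim_space TYPE('b)"
  shows "compact_operator T"
proof -
  obtain B :: "'b set" where B: "finite B" "span B = UNIV" using fd unfolding finite_dim_space_def by blast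
  define K where "K = closure (blinfun_apply T ` cball 0 1)"
  have "bounded (blinfun_apply T ` cball 0 1)"
    by (rule bounded_linear_image[OF bounded_cball blinfun.bounded_linear_right])
  then have bK: "bounded K" unfolding K_def by (rule bounded_closure)
  have cK: "closed K" unfolding K_def by simp
  have "seq_compact K" unfolding seq_compact_def
  proof (intro allI impI)
    fix f :: "nat \<Rightarrow> 'b" assume fK: "\<forall>n. f n \<in> K"
    have "bounded (range f)" using fK by (intro bounded_subset[OF bK]) auto
    then obtain l and r :: "nat \<Rightarrow> nat" where lr: "strict_mono r" "(f \<circ> r) \<longlonglongrightarrow> l"
      using fd_seq_compact[OF B(1)] B(2) by blast
    have "l \<in> K" by (rule closed_sequentially[OF cK _ lr(2)]) (use fK in simp)
    then show "\<exists>l\<in>K. \<exists>r::nat\<Rightarrow>nat. strict_mono r \<and> (f \<circ> r) \<longlonglongrightarrow> l" using lr by blast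
  qed
  then show ?thesis unfolding compact_operator_def K_def[symmetric] by (simp add: compact_eq_seq_compact_metric)
qed

theorem theorem2p5:
  assumes "reflexive_space TYPE('a::banach)" and "kadets_klee TYPE('a)"
    and "dim_gt_one TYPE('a)" and "dim_gt_one TYPE('b::banach)"
  shows "(\<forall>(T :: 'a \<Rightarrow>\<^sub>L 'b) \<epsilon>. compact_operator T \<and> norm T = 1 \<and> \<epsilon> > 0
             \<longrightarrow> uniform_BPB_approx T T \<epsilon>)
       \<and> (finite_dim_space TYPE('a) \<and> finite_dim_space TYPE('b) \<longrightarrow>
          (\<forall>(T :: 'a \<Rightarrow>\<^sub>L 'b) \<epsilon>. norm T = 1 \<and> \<epsilon> > 0 \<longrightarrow> (\<exists>A. uniform_BPB_approx A T \<epsilon>)))"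
proof (intro conjI allI impI)
  fix T :: "'a \<Rightarrow>\<^sub>L 'b" and \<epsilon> :: real
  assume "compact_operator T \<and> norm T = 1 \<and> \<epsilon> > 0"
  then show "uniform_BPB_approx T T \<epsilon>" using part1[OF assms(1,2)] by blast
next
  fix T :: "'a \<Rightarrow>\<^sub>L 'b" and \<epsilon> :: real
  assume fd: "finite_dim_space TYPE('a) \<and> finite_dim_space TYPE('b)" and h: "norm T = 1 \<and> \<epsilon> > 0"
  have "compact_operator T" using fd fd_compact_operator by blast
  then have "uniform_BPB_approx T T \<epsilon>" using part1[OF assms(1,2)] h by blast
  then show "\<exists>A. uniform_BPB_approx A T \<epsilon>" by blast
qed

end
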